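(* Let $X$ be an irreducible Markov chain on a finite state space $\overline{F}$ with transition matrix $r$ which is reversible for its stationary distribution $\eta=(\eta_j:j\in\overline{F})$, and let $\boldsymbol{\alpha}=(\alpha_j:j\in\overline{F})\in[0,1]^{\overline{F}}$ be non-zero. Let $r^{(\boldsymbol{\alpha})}_{skip}=(I-rI_{(1-\boldsymbol{\alpha})})^{-1}rI_{\boldsymbol{\alpha}}$ be the modification of $r$ by randomized skipping, and let $r^{(\boldsymbol{\alpha})}_{refl}$ be the modification of $r$ by randomized reflection, i.e. $r^{(\boldsymbol{\alpha})}_{refl}(i,j)=r(i,j)\alpha_j$ for $i\neq j$ and $r^{(\boldsymbol{\alpha})}_{refl}(i,i)=1-\sum_{j\neq i}r(i,j)\alpha_j$. Then $r^{(\boldsymbol{\alpha})}_{refl}\prec_P r^{(\boldsymbol{\alpha})}_{skip}$.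
   Context: $I_{\boldsymbol{\alpha}}$, $I_{(1-\boldsymbol{\alpha})}$ are the diagonal matrices with entries $\alpha_j$, resp. $1-\alpha_j$. Peskun order: for transition matrices $r,r'$ on a finite set $\overline{F}$ with $\xi r=\xi r'=\xi$ for some probability vector $\xi$, one writes $r'\prec_P r$ if $r'(j,i)\le r(j,i)$ for all $i,j\in\overline{F}$ with $i\neq j$. (Both modifications have stationary distribution proportional to $(\eta_j\alpha_j:j\in\overline{F})$.) *)

theory Defs
  imports "HOL-Analysis.Analysis"
begin

text \<open>Finite state space = finite index type 'n; matrices are real^'n^'n, row i = from-state i.\<close>

definition stochastic :: "real^'n^'n \<Rightarrow> bool" where
  "stochastic P \<longleftrightarrow> (\<forall>i j. 0 \<le> P$i$j) \<and> (\<forall>i. (\<Sum>j\<in>UNIV. P$i$j) = 1)"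

definition prob_vec :: "real^'n \<Rightarrow> bool" where
  "prob_vec v \<longleftrightarrow> (\<forall>i. 0 \<le> v$i) \<and> (\<Sum>i\<in>UNIV. v$i) = 1"

definition mat_pow :: "real^'n^'n \<Rightarrow> nat \<Rightarrow> real^'n^'n" where
  "mat_pow P k = ((\<lambda>M. M ** P) ^^ k) (mat 1)"

definition irreducible_chain :: "real^'n^'n \<Rightarrow> bool" where
  "irreducible_chain P \<longleftrightarrow> (\<forall>i j. \<exists>k. 0 < mat_pow P k $i$j)"

definition reversible :: "real^'n^'n \<Rightarrow> real^'n \<Rightarrow> bool" where
  "reversible P \<eta> \<longleftrightarrow> (\<forall>i j. \<eta>$i * P$i$j = \<eta>$j * P$j$i)"

definition diag_mat :: "real^'n \<Rightarrow> real^'n^'n" where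
  "diag_mat v = (\<chi> i j. if i = j then v$i else 0)"

definition skip_mod :: "real^'n^'n \<Rightarrow> real^'n \<Rightarrow> real^'n^'n" where
  "skip_mod r \<alpha> =
     matrix_inv (mat 1 - r ** diag_mat (\<chi> j. 1 - \<alpha>$j)) ** r ** diag_mat \<alpha>"

definition refl_mod :: "real^'n^'n \<Rightarrow> real^'n \<Rightarrow> real^'n^'n" where
  "refl_mod r \<alpha> = (\<chi> i j. if i \<noteq> j then r$i$j * \<alpha>$j
                          else 1 - (\<Sum>k\<in>UNIV - {i}. r$i$k * \<alpha>$k))"

definition peskun_le :: "real^'n^'n \<Rightarrow> real^'n^'n \<Rightarrow> bool" where
  "peskun_le r' r \<longleftrightarrow> stochastic r \<and> stochastic r' \<and>
     (\<exists>\<xi>. prob_vec \<xi> \<and> \<xi> v* r = \<xi> \<and> \<xi> v* r' = \<xi>) \<and>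
     (\<forall>i j. i \<noteq> j \<longrightarrow> r'$j$i \<le> r$j$i)"

end

theory Submission
  imports Defs
begin


lemma mult_diag: "(A ** diag_mat v)$i$j = A$i$j * v$j"
  by (simp add: matrix_matrix_mult_def diag_mat_def if_distrib cong: if_cong)

lemma mat_pow_0: "mat_pow P 0 = mat 1" by (simp add: mat_pow_def)
lemma mat_pow_Suc: "mat_pow P (Suc k) = mat_pow P k ** P" by (simp add: mat_pow_def)

lemma mat_pow_nonneg:
  assumes "stochastic P" shows "0 \<le> mat_pow P k $i$j"
proof (induction k arbitrary: j)
  case 0 then show ?case by (simp add: mat_pow_0 mat_def)
next
  case (Suc k)
  then show ?case using assms unfolding stochastic_def
    by (auto simp: mat_pow_Suc matrix_matrix_mult_def intro!: sum_nonneg)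
qed

lemma stat_pow:
  assumes "\<eta> v* P = \<eta>" shows "\<eta> v* mat_pow P k = \<eta>"
proof (induction k)
  case 0 then show ?case by (simp add: mat_pow_0)
next
  case (Suc k) then show ?case
    by (simp add: mat_pow_Suc vector_matrix_mul_assoc[symmetric] assms)
qed

lemma eta_pos:
  assumes st: "stochastic r" and irr: "irreducible_chain r" and pv: "prob_vec \<eta>"
    and stat: "\<eta> v* r = \<eta>"
  shows "0 < \<eta>$j"
proof -
  obtain i where i: "0 < \<eta>$i"
  proof (rule ccontr)
    assume "\<not> thesis"
    then have "\<forall>i. \<not> 0 < \<eta>$i" using that by blast
    then have "\<forall>i. \<eta>$i = 0" using pv unfolding prob_vec_def by (simp add: not_less order.antisym)
    then show False using pv unfolding prob_vec_def by simp
  qed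
  obtain k where k: "0 < mat_pow r k $i$j" using irr unfolding irreducible_chain_def by blast
  have e1: "\<eta>$j = (\<eta> v* mat_pow r k)$j" using stat_pow[OF stat] by simp
  have e2: "(\<eta> v* mat_pow r k)$j = (\<Sum>l\<in>UNIV. mat_pow r k $l$j * \<eta>$l)"
    by (simp add: vector_matrix_mult_def mult.commute)
  have e3: "mat_pow r k $i$j * \<eta>$i \<le> (\<Sum>l\<in>UNIV. mat_pow r k $l$j * \<eta>$l)"
    by (rule member_le_sum) (use mat_pow_nonneg[OF st] pv in \<open>auto simp: prob_vec_def\<close>)
  have "0 < mat_pow r k $i$j * \<eta>$i" by (rule mult_pos_pos[OF k i])
  then show ?thesis using e1 e2 e3 by linarith
qed

lemma closed_contra:
  assumes st: "stochastic r" and irr: "irreducible_chain r" and pv: "prob_vec \<eta>"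
    and stat: "\<eta> v* r = \<eta>" and anz: "\<alpha> \<noteq> 0"
    and A: "i0 \<in> A" and cl: "\<forall>i\<in>A. \<forall>k. 0 < r$i$k \<longrightarrow> k \<in> A \<and> \<alpha>$k = 0"
  shows False
proof -
  have reach: "\<forall>j. 0 < mat_pow r n $ i0 $ j \<longrightarrow> j \<in> A" for n
  proof (induction n)
    case 0 then show ?case using A by (auto simp: mat_pow_0 mat_def split: if_splits)
  next
    case (Suc n)
    show ?case
    proof (intro allI impI)
      fix j assume "0 < mat_pow r (Suc n) $ i0 $ j"
      then have "0 < (\<Sum>l\<in>UNIV. mat_pow r n $i0$l * r$l$j)"
        by (simp add: mat_pow_Suc matrix_matrix_mult_def)
      then obtain l where l: "0 < mat_pow r n $i0$l * r$l$j"
        using sum_nonpos[of UNIV "\<lambda>l. mat_pow r n $i0$l * r$l$j"] by (meson not_less)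
      have "0 \<le> r$l$j" using st by (simp add: stochastic_def)
      with l have "0 < mat_pow r n $i0$l" "0 < r$l$j"
        using mat_pow_nonneg[OF st] by (auto simp: zero_less_mult_iff)
      then show "j \<in> A" using Suc cl by blast
    qed
  qed
  obtain j0 where j0: "\<alpha>$j0 \<noteq> 0" using anz by (auto simp: vec_eq_iff)
  have p: "0 < \<eta>$j0" by (rule eta_pos[OF st irr pv stat])
  have "\<eta>$j0 = (\<eta> v* r)$j0" using stat by simp
  also have "\<dots> = (\<Sum>l\<in>UNIV. r$l$j0 * \<eta>$l)"
    by (simp add: vector_matrix_mult_def mult.commute)
  finally have "0 < (\<Sum>l\<in>UNIV. r$l$j0 * \<eta>$l)" using p by simp
  then obtain l where "0 < r$l$j0 * \<eta>$l"
    using sum_nonpos[of UNIV "\<lambda>l. r$l$j0 * \<eta>$l"] by (meson not_less)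
  moreover have "0 < \<eta>$l" by (rule eta_pos[OF st irr pv stat])
  ultimately have "0 < r$l$j0" by (simp add: zero_less_mult_iff)
  moreover obtain k where "0 < mat_pow r k $i0$l" using irr unfolding irreducible_chain_def by blast
  ultimately show False using reach cl j0 by blast
qed

lemma minprinc:
  assumes st: "stochastic r" and irr: "irreducible_chain r" and pv: "prob_vec \<eta>"
    and stat: "\<eta> v* r = \<eta>" and anz: "\<alpha> \<noteq> 0"
    and al: "\<forall>j. 0 \<le> \<alpha>$j \<and> \<alpha>$j \<le> 1"
    and h: "\<forall>i. (\<Sum>k\<in>UNIV. r$i$k * (1 - \<alpha>$k) * s$k) \<le> s$i"
  shows "0 \<le> s$i"
proof (rule ccontr)
  assume neg: "\<not> 0 \<le> s$i"
  have "Min (range (($) s)) \<in> range (($) s)" by (rule Min_in) auto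
  then obtain i0 where i0: "Min (range (($) s)) = s$i0" by (rule rangeE)
  have mn: "\<forall>j. s$i0 \<le> s$j"
  proof
    fix j show "s$i0 \<le> s$j" using Min_le[of "range (($) s)" "s$j"] i0 by simp
  qed
  define m where "m = s$i0"
  have m0: "m < 0" using mn[rule_format, of i] neg m_def by linarith
  let ?A = "{i. s$i = m}"
  have cl: "\<forall>i\<in>?A. \<forall>k. 0 < r$i$k \<longrightarrow> k \<in> ?A \<and> \<alpha>$k = 0"
  proof (intro ballI allI impI)
    fix i k assume iA: "i \<in> ?A" and rik: "0 < r$i$k"
    have rnn: "\<forall>k. 0 \<le> r$i$k" and rs: "(\<Sum>k\<in>UNIV. r$i$k) = 1"
      using st by (auto simp: stochastic_def)
    have tnn: "0 \<le> r$i$k' * ((1 - \<alpha>$k') * s$k' - m)" for k'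
    proof -
      have "m \<le> (1 - \<alpha>$k') * s$k'"
      proof (cases "0 \<le> s$k'")
        case True
        have "0 \<le> (1 - \<alpha>$k') * s$k'" using al True by simp
        then show ?thesis using m0 by linarith
      next
        case False
        have "s$k' \<le> (1 - \<alpha>$k') * s$k'"
        proof -
          have "0 \<le> \<alpha>$k' * (- s$k')" using al False by (intro mult_nonneg_nonneg) auto
          then show ?thesis by (simp add: algebra_simps)
        qed
        then show ?thesis using mn[rule_format, of k'] m_def by linarith
      qed
      then show ?thesis using rnn by simp
    qed
    have "(\<Sum>k\<in>UNIV. r$i$k * ((1 - \<alpha>$k) * s$k - m))
        = (\<Sum>k\<in>UNIV. r$i$k * (1 - \<alpha>$k) * s$k) - (\<Sum>k\<in>UNIV. r$i$k) * m"
    proof -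
      have "(\<Sum>k\<in>UNIV. r$i$k * ((1 - \<alpha>$k) * s$k - m))
          = (\<Sum>k\<in>UNIV. r$i$k * (1 - \<alpha>$k) * s$k - r$i$k * m)"
        by (rule sum.cong) (auto simp: algebra_simps)
      then show ?thesis by (simp add: sum_subtractf sum_distrib_right)
    qed
    also have "\<dots> \<le> 0" using h[rule_format, of i] iA rs by simp
    finally have le0: "(\<Sum>k\<in>UNIV. r$i$k * ((1 - \<alpha>$k) * s$k - m)) \<le> 0" .
    have "0 \<le> (\<Sum>k\<in>UNIV. r$i$k * ((1 - \<alpha>$k) * s$k - m))" by (rule sum_nonneg) (use tnn in auto)
    with le0 have "(\<Sum>k\<in>UNIV. r$i$k * ((1 - \<alpha>$k) * s$k - m)) = 0" by linarith
    then have "r$i$k * ((1 - \<alpha>$k) * s$k - m) = 0"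
      using tnn by (simp add: sum_nonneg_eq_0_iff)
    then have eq: "(1 - \<alpha>$k) * s$k = m" using rik by simp
    have ge: "m \<le> s$k" using mn m_def by simp
    have a: "0 \<le> \<alpha>$k" "\<alpha>$k \<le> 1" using al by auto
    have sneg: "s$k < 0"
    proof (rule ccontr)
      assume "\<not> s$k < 0"
      then have "0 \<le> (1 - \<alpha>$k) * s$k" using a by simp
      then show False using eq m0 by linarith
    qed
    have "s$k - m = \<alpha>$k * s$k" by (subst eq[symmetric]) (simp add: algebra_simps)
    moreover have "\<alpha>$k * s$k \<le> 0" using a sneg by (simp add: mult_nonneg_nonpos)
    ultimately have "\<alpha>$k * s$k = 0" using ge by linarith
    then have "\<alpha>$k = 0" using sneg by simp
    then show "k \<in> ?A \<and> \<alpha>$k = 0" using eq by simp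
  qed
  show False using closed_contra[OF st irr pv stat anz _ cl, of i0] m_def by simp
qed



theorem proposition2p10:
  fixes r :: "real^'n^'n" and \<eta> \<alpha> :: "real^'n"
  assumes st: "stochastic r"
    and irr: "irreducible_chain r"
    and pv: "prob_vec \<eta>"
    and stat: "\<eta> v* r = \<eta>"
    and rev: "reversible r \<eta>"
    and al: "\<forall>j. 0 \<le> \<alpha>$j \<and> \<alpha>$j \<le> 1"
    and anz: "\<alpha> \<noteq> 0"
  shows "invertible (mat 1 - r ** diag_mat (\<chi> j. 1 - \<alpha>$j))
         \<and> peskun_le (refl_mod r \<alpha>) (skip_mod r \<alpha>)"
proof -
  note mp = minprinc[OF st irr pv stat anz al]
  have rnn: "\<And>i j. 0 \<le> r$i$j" and rs: "\<And>i. (\<Sum>j\<in>UNIV. r$i$j) = 1"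
    using st by (auto simp: stochastic_def)
  define M where "M = mat 1 - r ** diag_mat (\<chi> j. 1 - \<alpha>$j)"
  have Ment: "M$i$j = (if i = j then 1 else 0) - r$i$j * (1 - \<alpha>$j)" for i j
    by (simp add: M_def mult_diag mat_def)
  have Mv: "(M *v x)$i = x$i - (\<Sum>k\<in>UNIV. r$i$k * (1 - \<alpha>$k) * x$k)" for x i
  proof -
    have "(M *v x)$i = (\<Sum>j\<in>UNIV. (if i = j then x$j else 0) - r$i$j * (1 - \<alpha>$j) * x$j)"
      unfolding matrix_vector_mult_def by (auto intro!: sum.cong simp: Ment left_diff_distrib)
    then show ?thesis by (simp add: sum_subtractf)
  qed
  have MB: "(M ** B)$i$j = B$i$j - (\<Sum>k\<in>UNIV. r$i$k * (1 - \<alpha>$k) * B$k$j)" for B i j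
  proof -
    have "(M ** B)$i$j = (\<Sum>k\<in>UNIV. (if i = k then B$k$j else 0) - r$i$k * (1 - \<alpha>$k) * B$k$j)"
      unfolding matrix_matrix_mult_def by (auto intro!: sum.cong simp: Ment left_diff_distrib)
    then show ?thesis by (simp add: sum_subtractf)
  qed
  have inj: "inj ((*v) M)"
  proof (rule injI)
    fix x y assume xy: "M *v x = M *v y"
    define z where "z = x - y"
    have z0: "(\<Sum>k\<in>UNIV. r$i$k * (1 - \<alpha>$k) * z$k) = z$i" for i
    proof -
      have "(M *v x)$i = (M *v y)$i" using xy by simp
      then have "x$i - (\<Sum>k\<in>UNIV. r$i$k * (1 - \<alpha>$k) * x$k) = y$i - (\<Sum>k\<in>UNIV. r$i$k * (1 - \<alpha>$k) * y$k)"
        by (simp add: Mv)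
      moreover have "(\<Sum>k\<in>UNIV. r$i$k * (1 - \<alpha>$k) * z$k)
          = (\<Sum>k\<in>UNIV. r$i$k * (1 - \<alpha>$k) * x$k) - (\<Sum>k\<in>UNIV. r$i$k * (1 - \<alpha>$k) * y$k)"
        by (simp add: z_def right_diff_distrib sum_subtractf)
      ultimately show ?thesis by (simp add: z_def)
    qed
    have p1: "0 \<le> z$i" for i by (rule mp) (use z0 in simp)
    have p2: "0 \<le> (-z)$i" for i
    proof (rule mp)
      show "\<forall>i. (\<Sum>k\<in>UNIV. r$i$k * (1 - \<alpha>$k) * (-z)$k) \<le> (-z)$i"
      proof
        fix i
        have "(\<Sum>k\<in>UNIV. r$i$k * (1 - \<alpha>$k) * (-z)$k) = - (\<Sum>k\<in>UNIV. r$i$k * (1 - \<alpha>$k) * z$k)"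
          by (simp add: sum_negf[symmetric])
        then show "(\<Sum>k\<in>UNIV. r$i$k * (1 - \<alpha>$k) * (-z)$k) \<le> (-z)$i" using z0[of i] by simp
      qed
    qed
    have "z = 0" using p1 p2 by (auto simp: vec_eq_iff intro: order.antisym)
    then show "x = y" by (simp add: z_def)
  qed
  have invM: "invertible M"
    using inj matrix_left_invertible_injective invertible_left_inverse by blast
  define N where "N = matrix_inv M"
  have MN: "M ** N = mat 1 \<and> N ** M = mat 1"
    unfolding N_def matrix_inv_def by (rule someI_ex) (use invM in \<open>simp add: invertible_def\<close>)
  define S where "S = skip_mod r \<alpha>"
  have S_eq: "S = (N ** r) ** diag_mat \<alpha>" by (simp add: S_def skip_mod_def N_def M_def)
  have MS: "M ** S = r ** diag_mat \<alpha>" using S_eq MN by (simp add: matrix_mul_assoc)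
  have Seq: "S$j$i = r$j$i * \<alpha>$i + (\<Sum>k\<in>UNIV. r$j$k * (1 - \<alpha>$k) * S$k$i)" for i j
  proof -
    have "(M ** S)$j$i = r$j$i * \<alpha>$i" using MS by (simp add: mult_diag)
    then show ?thesis using MB[of S j i] by simp
  qed
  have Snn: "0 \<le> S$j$i" for j i
  proof -
    have "0 \<le> (\<chi> j. S$j$i)$j"
    proof (rule mp, intro allI)
      fix j
      have "0 \<le> r$j$i * \<alpha>$i" using rnn al by simp
      then show "(\<Sum>k\<in>UNIV. r$j$k * (1 - \<alpha>$k) * (\<chi> j. S$j$i)$k) \<le> (\<chi> j. S$j$i)$j"
        using Seq[of j i] by simp
    qed
    then show ?thesis by simp
  qed
  define t where "t = (\<chi> j. (\<Sum>i\<in>UNIV. S$j$i) - 1)"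
  have t0: "(\<Sum>k\<in>UNIV. r$j$k * (1 - \<alpha>$k) * t$k) = t$j" for j
  proof -
    have "(\<Sum>i\<in>UNIV. S$j$i) = (\<Sum>i\<in>UNIV. r$j$i * \<alpha>$i) + (\<Sum>i\<in>UNIV. \<Sum>k\<in>UNIV. r$j$k * (1 - \<alpha>$k) * S$k$i)"
      by (subst Seq) (simp add: sum.distrib)
    also have "(\<Sum>i\<in>UNIV. \<Sum>k\<in>UNIV. r$j$k * (1 - \<alpha>$k) * S$k$i)
        = (\<Sum>k\<in>UNIV. r$j$k * (1 - \<alpha>$k) * (\<Sum>i\<in>UNIV. S$k$i))"
      by (subst sum.swap) (simp add: sum_distrib_left)
    also have "(\<Sum>i\<in>UNIV. r$j$i * \<alpha>$i) = 1 - (\<Sum>k\<in>UNIV. r$j$k * (1 - \<alpha>$k))"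
      using rs[of j] by (simp add: right_diff_distrib sum_subtractf)
    finally have "(\<Sum>i\<in>UNIV. S$j$i) - 1 = (\<Sum>k\<in>UNIV. r$j$k * (1 - \<alpha>$k) * (\<Sum>i\<in>UNIV. S$k$i)) - (\<Sum>k\<in>UNIV. r$j$k * (1 - \<alpha>$k))"
      by simp
    also have "\<dots> = (\<Sum>k\<in>UNIV. r$j$k * (1 - \<alpha>$k) * ((\<Sum>i\<in>UNIV. S$k$i) - 1))"
      by (simp add: right_diff_distrib sum_subtractf)
    finally show ?thesis by (simp add: t_def)
  qed
  have q1: "0 \<le> t$i" for i by (rule mp) (use t0 in simp)
  have q2: "0 \<le> (-t)$i" for i
  proof (rule mp)
    show "\<forall>i. (\<Sum>k\<in>UNIV. r$i$k * (1 - \<alpha>$k) * (-t)$k) \<le> (-t)$i"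
    proof
      fix i
      have "(\<Sum>k\<in>UNIV. r$i$k * (1 - \<alpha>$k) * (-t)$k) = - (\<Sum>k\<in>UNIV. r$i$k * (1 - \<alpha>$k) * t$k)"
        by (simp add: sum_negf[symmetric])
      then show "(\<Sum>k\<in>UNIV. r$i$k * (1 - \<alpha>$k) * (-t)$k) \<le> (-t)$i" using t0[of i] by simp
    qed
  qed
  have Srow: "(\<Sum>i\<in>UNIV. S$j$i) = 1" for j
    using q1[of j] q2[of j] by (simp add: t_def)
  have stS: "stochastic S" using Snn Srow by (simp add: stochastic_def)
  define R where "R = refl_mod r \<alpha>"
  have Rent: "R$i$j = (if i \<noteq> j then r$i$j * \<alpha>$j else 1 - (\<Sum>k\<in>UNIV - {i}. r$i$k * \<alpha>$k))" for i j
    by (simp add: R_def refl_mod_def)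
  have Roff: "(\<Sum>k\<in>UNIV - {i}. R$i$k) = (\<Sum>k\<in>UNIV - {i}. r$i$k * \<alpha>$k)" for i
    by (rule sum.cong) (auto simp: Rent)
  have Rrow: "(\<Sum>j\<in>UNIV. R$i$j) = 1" for i
    using sum.remove[of UNIV i "\<lambda>j. R$i$j"] Roff[of i] by (simp add: Rent)
  have Rnn: "0 \<le> R$i$j" for i j
  proof (cases "i = j")
    case True
    have "(\<Sum>k\<in>UNIV - {i}. r$i$k * \<alpha>$k) \<le> (\<Sum>k\<in>UNIV - {i}. r$i$k)"
      by (rule sum_mono) (use rnn al in \<open>simp add: mult_left_le\<close>)
    also have "\<dots> \<le> (\<Sum>k\<in>UNIV. r$i$k)"
      by (rule sum_mono2) (auto simp: rnn)
    finally show ?thesis using True rs[of i] by (simp add: Rent)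
  next
    case False then show ?thesis using rnn al by (simp add: Rent)
  qed
  have stR: "stochastic R" using Rnn Rrow by (simp add: stochastic_def)
  have pesk: "R$j$i \<le> S$j$i" if "i \<noteq> j" for i j
  proof -
    have "0 \<le> (\<Sum>k\<in>UNIV. r$j$k * (1 - \<alpha>$k) * S$k$i)"
      by (rule sum_nonneg) (use rnn al Snn in simp)
    then show ?thesis using Seq[of j i] that by (simp add: Rent)
  qed
  define w where "w = (\<chi> j. \<eta>$j * \<alpha>$j)"
  have etapos: "0 < \<eta>$j" for j by (rule eta_pos[OF st irr pv stat])
  define c where "c = (\<Sum>j\<in>UNIV. w$j)"
  have wnn: "0 \<le> w$j" for j using etapos[of j] al by (simp add: w_def less_imp_le)
  have cpos: "0 < c"
  proof -
    obtain j0 where j0: "\<alpha>$j0 \<noteq> 0" using anz by (auto simp: vec_eq_iff)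
    then have "0 < w$j0" using etapos[of j0] al by (simp add: w_def order_le_neq_trans)
    also have "w$j0 \<le> c" unfolding c_def by (rule member_le_sum) (use wnn in auto)
    finally show ?thesis .
  qed
  have wM: "\<eta> v* M = w"
  proof -
    have "(\<eta> v* M)$j = w$j" for j
    proof -
      have "(\<eta> v* M)$j = (\<Sum>i\<in>UNIV. \<eta>$i * M$i$j)" by (simp add: vector_matrix_mult_def)
      also have "\<dots> = \<eta>$j - (1 - \<alpha>$j) * (\<Sum>i\<in>UNIV. \<eta>$i * r$i$j)"
      proof -
        have "(\<Sum>i\<in>UNIV. \<eta>$i * M$i$j) = (\<Sum>i\<in>UNIV. (if i = j then \<eta>$i else 0) - (1 - \<alpha>$j) * (\<eta>$i * r$i$j))"
          by (auto intro!: sum.cong simp: Ment algebra_simps)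
        then show ?thesis by (simp add: sum_subtractf sum_distrib_left)
      qed
      also have "(\<Sum>i\<in>UNIV. \<eta>$i * r$i$j) = \<eta>$j"
      proof -
        have "(\<eta> v* r)$j = (\<Sum>i\<in>UNIV. \<eta>$i * r$i$j)" by (simp add: vector_matrix_mult_def)
        then show ?thesis using stat by simp
      qed
      finally show ?thesis by (simp add: w_def algebra_simps)
    qed
    then show ?thesis by (simp add: vec_eq_iff)
  qed
  have wS: "w v* S = w"
  proof -
    have "w v* S = \<eta> v* (M ** S)" by (metis wM vector_matrix_mul_assoc)
    also have "\<dots> = (\<eta> v* r) v* diag_mat \<alpha>" by (simp add: MS vector_matrix_mul_assoc)
    also have "\<dots> = \<eta> v* diag_mat \<alpha>" by (simp only: stat)
    also have "\<dots> = w"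
      by (simp add: vec_eq_iff vector_matrix_mult_def diag_mat_def w_def if_distrib cong: if_cong)
    finally show ?thesis .
  qed
  have wR: "w v* R = w"
  proof -
    have "(w v* R)$j = w$j" for j
    proof -
      have "(w v* R)$j = (\<Sum>i\<in>UNIV. R$i$j * w$i)" by (simp add: vector_matrix_mult_def mult.commute)
      also have "\<dots> = R$j$j * w$j + (\<Sum>i\<in>UNIV - {j}. R$i$j * w$i)"
        by (rule sum.remove) auto
      also have "(\<Sum>i\<in>UNIV - {j}. R$i$j * w$i) = (\<Sum>i\<in>UNIV - {j}. w$j * (r$j$i * \<alpha>$i))"
      proof (rule sum.cong)
        fix i assume "i \<in> UNIV - {j}"
        then have "i \<noteq> j" by simp
        have eq: "\<eta>$i * r$i$j = \<eta>$j * r$j$i" using rev by (simp add: reversible_def)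
        have "r$i$j * \<alpha>$j * (\<eta>$i * \<alpha>$i) = (\<eta>$i * r$i$j) * (\<alpha>$i * \<alpha>$j)" by (simp add: mult_ac)
        also have "\<dots> = (\<eta>$j * r$j$i) * (\<alpha>$i * \<alpha>$j)" by (simp only: eq)
        also have "\<dots> = \<eta>$j * \<alpha>$j * (r$j$i * \<alpha>$i)" by (simp add: mult_ac)
        finally have "r$i$j * \<alpha>$j * (\<eta>$i * \<alpha>$i) = \<eta>$j * \<alpha>$j * (r$j$i * \<alpha>$i)" .
        then show "R$i$j * w$i = w$j * (r$j$i * \<alpha>$i)" using \<open>i \<noteq> j\<close> by (simp add: Rent w_def)
      qed simp
      also have "\<dots> = w$j * (\<Sum>i\<in>UNIV - {j}. r$j$i * \<alpha>$i)" by (simp add: sum_distrib_left)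
      finally show ?thesis by (simp add: Rent algebra_simps)
    qed
    then show ?thesis by (simp add: vec_eq_iff)
  qed
  define \<xi> where "\<xi> = (1 / c) *s w"
  have pvx: "prob_vec \<xi>"
    unfolding prob_vec_def \<xi>_def using cpos wnn
    by (simp add: c_def sum_divide_distrib[symmetric])
  have scal: "((1 / c) *s v) v* A = (1 / c) *s (v v* A)" for v :: "real^'n" and A :: "real^'n^'n"
    by (simp add: vec_eq_iff vector_matrix_mult_def sum_distrib_left mult_ac)
  have xS: "\<xi> v* S = \<xi>" using wS by (simp add: \<xi>_def scal)
  have xR: "\<xi> v* R = \<xi>" using wR by (simp add: \<xi>_def scal)
  have "peskun_le R S"
    unfolding peskun_le_def using stS stR pvx xS xR pesk by blast
  then show ?thesis using invM by (simp add: M_def R_def S_def)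
qed

end
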